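(* Let $0\le\gamma<1$ and let $f\in\mathcal{B}(\Omega_\gamma)$, with $f(z)=\sum_{n=0}^\infty a_n z^n$ for $z\in\mathbb{D}$. Put $\|f_0\|_r=\sum_{n=1}^\infty |a_n|^2 r^{2n}$. Then $$\sum_{n=0}^\infty |a_n| r^n+\left(\frac{1}{1+|a_0|}+\frac{r}{1-r}\right)\|f_0\|_r\le 1\qquad\text{for all } 0\le r\le r_0:=\frac{1+\gamma}{3+\gamma}.$$ The number $r_0$ cannot be improved: for every $r\in(r_0,1)$ there exists $f\in\mathcal{B}(\Omega_\gamma)$ for which the left-hand side exceeds $1$.
   Context: $\mathbb{D}$ is the open unit disk. For $0\le\gamma<1$, $\Omega_\gamma=\{z\in\mathbb{C}: |z+\frac{\gamma}{1-\gamma}|<\frac{1}{1-\gamma}\}$, a disk containing $\mathbb{D}$. For a simply connected domain $\Omega\supseteq\mathbb{D}$, $\mathcal{B}(\Omega)$ denotes the class of functions $f$ analytic on $\Omega$ with $f(\Omega)\subseteq\overline{\mathbb{D}}$. *)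

theory Defs
  imports "HOL-Complex_Analysis.Complex_Analysis"
begin

definition Omega :: "real \<Rightarrow> complex set" where
  "Omega \<gamma> = ball (complex_of_real (- \<gamma> / (1 - \<gamma>))) (1 / (1 - \<gamma>))"

definition bclass :: "complex set \<Rightarrow> (complex \<Rightarrow> complex) set" where
  "bclass \<Omega> = {f. f analytic_on \<Omega> \<and> (\<forall>z\<in>\<Omega>. f z \<in> cball 0 1)}"

definition taylor_coeff :: "(complex \<Rightarrow> complex) \<Rightarrow> nat \<Rightarrow> complex" where
  "taylor_coeff f n = (deriv ^^ n) f 0 / fact n"

definition bohr_lhs :: "(complex \<Rightarrow> complex) \<Rightarrow> real \<Rightarrow> real" where
  "bohr_lhs f r =
     (let a = taylor_coeff f;
          nf0 = (\<Sum>n. norm (a (Suc n)) ^ 2 * r ^ (2 * Suc n))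
      in (\<Sum>n. norm (a n) * r ^ n) + (1 / (1 + norm (a 0)) + r / (1 - r)) * nf0)"

end

theory Submission
  imports Defs
begin


lemma lin_nth:
  fixes F :: "complex fps"
  shows "(F * (fps_const \<alpha> - fps_const \<beta> * fps_X))$m = \<alpha> * F$m - (if m = 0 then 0 else \<beta> * F$(m-1))"
proof -
  have "F * (fps_const \<alpha> - fps_const \<beta> * fps_X) = fps_const \<alpha> * F - fps_const \<beta> * (fps_X * F)"
    by (simp add: algebra_simps)
  then show ?thesis by simp
qed

lemma div_eq:
  fixes D E N :: "complex fps"
  assumes "D$0 \<noteq> 0" "E * D = N"
  shows "N / D = E"
proof -
  have "N / D = E * (D * inverse D)" using assms by (simp add: fps_divide_unit mult.assoc)
  also have "D * inverse D = 1" using assms(1) by (simp add: inverse_mult_eq_1')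
  finally show ?thesis by simp
qed



definition Qf :: "real \<Rightarrow> complex fps" where
  "Qf \<gamma> = Abs_fps (\<lambda>m. complex_of_real (\<gamma>^m / (1+\<gamma>)^(Suc m)))"
definition Pf :: "real \<Rightarrow> complex fps" where "Pf \<gamma> = fps_X * Qf \<gamma>"
definition Den :: "real \<Rightarrow> complex fps" where
  "Den \<gamma> = fps_const (complex_of_real (1+\<gamma>)) - fps_const (complex_of_real \<gamma>) * fps_X"
definition Uf :: "real \<Rightarrow> complex fps" where
  "Uf \<gamma> = Abs_fps (\<lambda>m. if m = 0 then 1 else complex_of_real (1/(1+\<gamma>)))"

lemma cg: "\<gamma> \<ge> 0 \<Longrightarrow> 1 + complex_of_real \<gamma> \<noteq> 0"
proof -
  assume "\<gamma> \<ge> 0"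
  then have "1+\<gamma> \<noteq> 0" by simp
  then have "complex_of_real (1+\<gamma>) \<noteq> 0" by (metis of_real_eq_0_iff)
  then show ?thesis by simp
qed

lemma Den0: "\<gamma> \<ge> 0 \<Longrightarrow> Den \<gamma> $ 0 \<noteq> 0"
  by (simp add: Den_def cg)

lemma Pf_mult: assumes "\<gamma> \<ge> 0" shows "Pf \<gamma> * Den \<gamma> = fps_X"
proof (rule fps_ext)
  fix m
  have g: "1 + \<gamma> \<noteq> 0" using assms by simp
  show "(Pf \<gamma> * Den \<gamma>) $ m = fps_X $ m"
    unfolding Den_def lin_nth
  proof (cases m)
    case 0 then show "complex_of_real (1 + \<gamma>) * Pf \<gamma> $ m - (if m = 0 then 0 else complex_of_real \<gamma> * Pf \<gamma> $ (m - 1)) = fps_X $ m"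
      by (simp add: Pf_def)
  next
    case (Suc k)
    show "complex_of_real (1 + \<gamma>) * Pf \<gamma> $ m - (if m = 0 then 0 else complex_of_real \<gamma> * Pf \<gamma> $ (m - 1)) = fps_X $ m"
    proof (cases k)
      case 0 then show ?thesis using Suc g cg[OF assms] by (simp add: Pf_def Qf_def fps_X_def field_simps)
    next
      case (Suc j)
      have "(1 + \<gamma>) * (\<gamma> ^ Suc j / (1 + \<gamma>) ^ Suc (Suc j)) = \<gamma> ^ Suc j / (1 + \<gamma>) ^ Suc j"
        using g by (simp only: power_Suc[of "1+\<gamma>" "Suc j"]) simp
      then have "(1 + \<gamma>) * (\<gamma> ^ Suc j / (1 + \<gamma>) ^ Suc (Suc j)) = \<gamma> * (\<gamma> ^ j / (1 + \<gamma>) ^ Suc j)"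
        by simp
      then have "complex_of_real ((1 + \<gamma>) * (\<gamma> ^ Suc j / (1 + \<gamma>) ^ Suc (Suc j))) = complex_of_real (\<gamma> * (\<gamma> ^ j / (1 + \<gamma>) ^ Suc j))"
        by simp
      then show ?thesis using \<open>m = Suc k\<close> Suc by (simp add: Pf_def Qf_def)
    qed
  qed
qed

lemma Pf_eq: "\<gamma> \<ge> 0 \<Longrightarrow> fps_X / Den \<gamma> = Pf \<gamma>"
  by (rule div_eq) (auto simp: Den0 Pf_mult)

lemma Uf_mult: assumes "\<gamma> \<ge> 0" shows "Uf \<gamma> * (1 - Pf \<gamma>) = 1"
proof -
  have g: "1 + \<gamma> \<noteq> 0" using assms by simp
  have "Den \<gamma> - fps_X = fps_const (complex_of_real (1+\<gamma>)) - fps_const (complex_of_real (1+\<gamma>)) * fps_X"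
    by (simp add: Den_def algebra_simps)
  have A: "Uf \<gamma> * (Den \<gamma> - fps_X) = Den \<gamma>"
  proof (rule fps_ext)
    fix m
    show "(Uf \<gamma> * (Den \<gamma> - fps_X)) $ m = Den \<gamma> $ m"
      unfolding \<open>Den \<gamma> - fps_X = _\<close> lin_nth
      using g cg[OF assms] by (cases m; cases "m - 1") (auto simp: Uf_def Den_def fps_X_def field_simps)
  qed
  have "Uf \<gamma> * (1 - Pf \<gamma>) * Den \<gamma> = Uf \<gamma> * (Den \<gamma> - Pf \<gamma> * Den \<gamma>)"
    by (simp add: algebra_simps)
  also have "\<dots> = 1 * Den \<gamma>" using A Pf_mult[OF assms] by simp
  finally have "Uf \<gamma> * (1 - Pf \<gamma>) * Den \<gamma> = 1 * Den \<gamma>" .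
  moreover have "Den \<gamma> \<noteq> 0" using Den0[OF assms] by auto
  ultimately show ?thesis by (metis mult_cancel_right)
qed

lemma T_nth: assumes "\<gamma> \<ge> 0" "n \<ge> 1"
  shows "(\<Sum>i=0..n. (Pf \<gamma>)^i $ n) = complex_of_real (1/(1+\<gamma>))"
proof -
  let ?S = "\<Sum>i\<le>n. (Pf \<gamma>)^i"
  have "?S = Uf \<gamma> * (1 - Pf \<gamma>) * ?S" using Uf_mult[OF assms(1)] by simp
  also have "\<dots> = Uf \<gamma> * (1 - (Pf \<gamma>)^Suc n)" by (simp add: mult.assoc sum_gp_basic)
  also have "\<dots> = Uf \<gamma> - fps_X ^ Suc n * ((Qf \<gamma>)^Suc n * Uf \<gamma>)"
    by (simp add: Pf_def algebra_simps power_mult_distrib)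
  finally have "?S $ n = (Uf \<gamma> - fps_X ^ Suc n * ((Qf \<gamma>)^Suc n * Uf \<gamma>)) $ n" by simp
  also have "\<dots> = Uf \<gamma> $ n" by (simp only: fps_sub_nth fps_X_power_mult_nth) simp
  finally show ?thesis using assms by (simp add: Uf_def fps_sum_nth atLeast0AtMost)
qed

definition nn :: "complex fps \<Rightarrow> bool" where "nn F \<longleftrightarrow> (\<forall>m. F $ m = complex_of_real (norm (F $ m)))"

lemma nn_mult: "nn F \<Longrightarrow> nn G \<Longrightarrow> nn (F * G)"
proof -
  assume F: "nn F" and G: "nn G"
  show "nn (F * G)" unfolding nn_def
  proof
    fix m
    have "(F*G)$m = (\<Sum>i=0..m. complex_of_real (norm (F$i) * norm (G$(m-i))))"
      unfolding fps_mult_nth by (intro sum.cong refl, subst F[unfolded nn_def], subst G[unfolded nn_def]) simp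
    also have "\<dots> = complex_of_real (\<Sum>i=0..m. norm (F$i) * norm (G$(m-i)))" by simp
    finally have e: "(F*G)$m = complex_of_real (\<Sum>i=0..m. norm (F$i) * norm (G$(m-i)))" .
    have "norm ((F*G)$m) = (\<Sum>i=0..m. norm (F$i) * norm (G$(m-i)))"
      by (subst e, subst norm_of_real, rule abs_of_nonneg, simp add: sum_nonneg)
    then show "(F*G)$m = complex_of_real (norm ((F*G)$m))" using e by simp
  qed
qed

lemma nn_power: "nn F \<Longrightarrow> nn (F ^ k)"
proof (induction k)
  case 0 then show ?case by (auto simp: nn_def)
next
  case (Suc k) then show ?case by (simp add: nn_mult)
qed

lemma nn_Pf: "\<gamma> \<ge> 0 \<Longrightarrow> nn (Pf \<gamma>)"
proof -
  assume g: "\<gamma> \<ge> 0"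
  show ?thesis unfolding nn_def Pf_def fps_X_mult_nth
  proof
    fix m
    have q: "Qf \<gamma> $ (m-1) = complex_of_real (\<gamma>^(m-1) / (1+\<gamma>)^(Suc (m-1)))" by (simp add: Qf_def)
    have nn: "\<gamma>^(m-1) / (1+\<gamma>)^(Suc (m-1)) \<ge> 0" using g by simp
    have "Qf \<gamma> $ (m-1) = complex_of_real (cmod (Qf \<gamma> $ (m-1)))"
      by (subst (2) q, subst norm_of_real, subst abs_of_nonneg[OF nn]) (rule q)
    then show "(if m = 0 then 0 else Qf \<gamma> $ (m - 1)) = complex_of_real (cmod (if m = 0 then 0 else Qf \<gamma> $ (m - 1)))"
      by simp
  qed
qed



lemma le_one_lim:
  fixes x :: real
  assumes "\<And>r. 0 < r \<Longrightarrow> r < 1 \<Longrightarrow> x \<le> 1 / r^k"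
  shows "x \<le> 1"
proof -
  have "((\<lambda>r. 1 / r^k) \<longlongrightarrow> 1 / 1^k) (at_left (1::real))"
    by (intro tendsto_intros) auto
  then have lim: "((\<lambda>r. 1 / r^k) \<longlongrightarrow> 1) (at_left (1::real))" by simp
  have "eventually (\<lambda>r. 0 < r \<and> r < (1::real)) (at_left 1)"
    using eventually_at_left_real[of 0 "1::real"] by (auto elim: eventually_mono)
  then have ev: "eventually (\<lambda>r. x \<le> 1 / r^k) (at_left (1::real))"
    by eventually_elim (use assms in auto)
  show ?thesis by (rule tendsto_lowerbound[OF lim ev]) simp
qed

lemma root_sum:
  assumes k: "k \<ge> 1"
  defines "\<omega> \<equiv> exp (2 * of_real pi * \<i> / of_nat k)"
  shows "(\<Sum>j<k. (\<omega>^j)^m) = (if k dvd m then of_nat k else 0)"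
proof -
  have pw: "\<omega>^n = exp (of_nat n * (2 * of_real pi * \<i> / of_nat k))" for n
    unfolding \<omega>_def by (rule exp_of_nat_mult[symmetric])
  have sw: "(\<omega>^j)^m = (\<omega>^m)^j" for j by (simp add: power_mult[symmetric] mult.commute)
  show ?thesis
  proof (cases "k dvd m")
    case True
    then obtain q where q: "m = k * q" by auto
    have "\<omega>^m = exp (of_nat q * (2 * of_real pi * \<i>))"
      unfolding pw q using k by (simp add: field_simps)
    also have "\<dots> = 1" by (simp add: exp_of_nat_mult)
    finally show ?thesis using True sw by simp
  next
    case False
    have ne: "\<omega>^m \<noteq> 1"
    proof
      assume "\<omega>^m = 1"
      then have "exp (of_nat m * (2 * of_real pi * \<i> / of_nat k)) = 1" by (simp add: pw)
      then obtain n :: int where n: "Im (of_nat m * (2 * of_real pi * \<i> / of_nat k)) = of_int (2 * n) * pi"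
        by (auto simp: exp_eq_1)
      then have "real m * (2 * pi / real k) = 2 * real_of_int n * pi" by simp
      then have "real m = real_of_int n * real k" using k by (simp add: field_simps)
      then have "int m = n * int k" by (metis of_int_eq_iff of_int_mult of_int_of_nat_eq)
      then have "k dvd m" by (metis dvd_triv_right int_dvd_int_iff)
      with False show False by simp
    qed
    have k1: "(\<omega>^m)^k = 1"
    proof -
      have "(\<omega>^m)^k = (\<omega>^k)^m" by (simp add: power_mult[symmetric] mult.commute)
      also have "\<omega>^k = exp (2 * of_real pi * \<i>)" unfolding pw using k by simp
      also have "\<dots> = 1" by simp
      finally show ?thesis by simp
    qed
    have "(\<Sum>j<k. (\<omega>^j)^m) = (\<Sum>j<k. (\<omega>^m)^j)" using sw by simp
    also have "\<dots> = ((\<omega>^m)^k - 1) / (\<omega>^m - 1)" by (rule geometric_sum[OF ne])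
    also have "\<dots> = 0" using k1 by simp
    finally show ?thesis using False by simp
  qed
qed



lemma mob_le:
  fixes c h :: complex
  assumes "norm c \<le> 1" "norm h \<le> 1"
  shows "norm (h - c) \<le> norm (1 - cnj c * h)"
proof -
  have e: "complex_of_real ((norm (1 - cnj c * h))^2 - (norm (h - c))^2) =
           complex_of_real ((1 - (norm c)^2) * (1 - (norm h)^2))"
    unfolding of_real_diff of_real_mult complex_norm_square of_real_1
    by (simp add: algebra_simps)
  have "(norm (1 - cnj c * h))^2 - (norm (h - c))^2 = (1 - (norm c)^2) * (1 - (norm h)^2)"
    using e of_real_eq_iff by blast
  moreover have "(1 - (norm c)^2) * (1 - (norm h)^2) \<ge> 0"
    using assms by (intro mult_nonneg_nonneg) (auto simp: power_le_one abs_square_le_1)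
  ultimately have "(norm (h - c))^2 \<le> (norm (1 - cnj c * h))^2" by linarith
  then show ?thesis by (rule power2_le_imp_le) simp
qed

lemma fps_div_mult_cancel:
  fixes N D :: "complex fps"
  assumes "D $ 0 \<noteq> 0"
  shows "N / D * D = N"
  using assms by (simp add: fps_divide_unit mult.assoc inverse_mult_eq_1)

lemma wiener_strict:
  fixes G :: "complex \<Rightarrow> complex"
  assumes holo: "G holomorphic_on ball 0 1"
      and bd: "\<And>w. w \<in> ball 0 1 \<Longrightarrow> norm (G w) \<le> t" and t: "t < 1" and k: "k \<ge> 1"
  shows "norm ((deriv^^k) G 0 / fact k) \<le> 1 - (norm (G 0))^2"
proof -
  define \<omega> where "\<omega> = exp (2 * of_real pi * \<i> / of_nat k)"
  define b where "b m = (deriv^^m) G 0 / fact m" for m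
  define c where "c = G 0"
  have nw: "norm (\<omega>^j) = 1" for j
    by (simp add: \<omega>_def norm_power)
  have inball: "\<omega>^j * w \<in> ball 0 1" if "w \<in> ball 0 1" for j w
    using that by (simp add: norm_mult nw)
  have holj: "(\<lambda>w. G (\<omega>^j * w)) holomorphic_on ball 0 1" for j
  proof -
    have "(G \<circ> (\<lambda>w. \<omega>^j * w)) holomorphic_on ball 0 1"
    proof (rule holomorphic_on_compose_gen[OF _ holo])
      show "(\<lambda>w. \<omega>^j * w) holomorphic_on ball 0 1" by (intro holomorphic_intros)
      show "(\<lambda>w. \<omega>^j * w) ` ball 0 1 \<subseteq> ball 0 1" using inball by blast
    qed
    then show ?thesis by (simp add: o_def)
  qed
  define F where "F j = fps_expansion (\<lambda>w. G (\<omega>^j * w)) 0" for j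
  have Fexp: "(\<lambda>w. G (\<omega>^j * w)) has_fps_expansion F j" for j
    unfolding F_def by (rule has_fps_expansion_fps_expansion[OF open_ball _ holj]) simp
  have Fnth: "F j $ m = (\<omega>^j)^m * b m" for j m
  proof -
    have "F j $ m = (deriv ^^ m) (\<lambda>w. G (\<omega>^j * w)) 0 / fact m"
      by (rule fps_nth_fps_expansion[OF Fexp])
    also have "(deriv ^^ m) (\<lambda>w. G (\<omega>^j * w)) 0 = (\<omega>^j)^m * (deriv ^^ m) G (\<omega>^j * 0)"
      by (rule higher_deriv_compose_linear[OF holo open_ball[of 0 1] open_ball[of 0 1]]) (simp, rule inball)
    finally show ?thesis by (simp add: b_def)
  qed
  define h where "h w = (\<Sum>j<k. G (\<omega>^j * w)) * (1 / of_nat k)" for w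
  define hf where "hf = (\<Sum>j<k. F j) * fps_const (1 / of_nat k)"
  have hexp: "h has_fps_expansion hf"
    unfolding h_def[abs_def] hf_def
    by (intro has_fps_expansion_cmult_right has_fps_expansion_sum Fexp)
  have hnth: "hf $ m = (if k dvd m then b m else 0)" for m
  proof -
    have "hf $ m = (\<Sum>j<k. (\<omega>^j)^m) * b m * (1 / of_nat k)"
      by (simp add: hf_def fps_sum_nth Fnth sum_distrib_right sum_divide_distrib)
    also have "\<dots> = (if k dvd m then b m else 0)"
      unfolding \<omega>_def root_sum[OF k] using k by simp
    finally show ?thesis .
  qed
  have c0: "b 0 = c" by (simp add: b_def c_def)
  have hf0: "hf $ 0 = c" using hnth[of 0] c0 by simp
  have hholo: "h holomorphic_on ball 0 1"
    unfolding h_def[abs_def] by (intro holomorphic_intros holj)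
  have hbd: "norm (h w) \<le> t" if w: "w \<in> ball 0 1" for w
  proof -
    have "norm (\<Sum>j<k. G (\<omega>^j * w)) \<le> (\<Sum>j<k. t)"
      by (rule sum_norm_le) (auto intro: bd inball w)
    then have "norm (\<Sum>j<k. G (\<omega>^j * w)) \<le> of_nat k * t" by simp
    then show ?thesis using k unfolding h_def by (simp add: norm_mult norm_divide field_simps)
  qed
  have t0: "0 \<le> t" using bd[of 0] norm_ge_zero[of "G 0"] by (meson centre_in_ball order_trans zero_less_one)
  have nc: "norm c \<le> t" using bd[of 0] by (simp add: c_def)
  have dnz: "1 - cnj c * h w \<noteq> 0" if "w \<in> ball 0 1" for w
  proof
    assume "1 - cnj c * h w = 0"
    then have "norm (cnj c * h w) = 1" by (metis eq_iff_diff_eq_0 norm_one)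
    moreover have "norm (cnj c * h w) \<le> t * t"
      unfolding norm_mult complex_mod_cnj using nc hbd[OF that] t0 by (intro mult_mono) auto
    moreover have "t * t < 1"
    proof -
      have "t * t \<le> 1 * t" using t t0 by (intro mult_right_mono) auto
      then show ?thesis using t by linarith
    qed
    ultimately show False by simp
  qed
  define H where "H w = (h w - c) / (1 - cnj c * h w)" for w
  have Hholo: "H holomorphic_on ball 0 1"
    unfolding H_def[abs_def] by (intro holomorphic_intros hholo dnz)
  have Hbd: "norm (H w) \<le> 1" if w: "w \<in> ball 0 1" for w
  proof -
    have "norm (h w - c) \<le> norm (1 - cnj c * h w)"
      by (rule mob_le) (use nc hbd[OF w] t in auto)
    then show ?thesis unfolding H_def norm_divide using dnz[OF w]
      by (simp add: divide_le_eq_1)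
  qed
  define q where "q = (deriv^^k) H 0 / fact k"
  have q1: "norm q \<le> 1"
  proof (rule le_one_lim)
    fix r :: real assume r: "0 < r" "r < 1"
    have "norm ((deriv^^k) H 0) \<le> fact k * 1 / r^k"
    proof (rule Cauchy_inequality)
      show "H holomorphic_on ball 0 r" using r by (intro holomorphic_on_subset[OF Hholo]) auto
      show "continuous_on (cball 0 r) H"
        using r by (intro holomorphic_on_imp_continuous_on holomorphic_on_subset[OF Hholo]) auto
      show "norm (H x) \<le> 1" if "norm (0 - x) = r" for x using that r by (intro Hbd) auto
    qed (use r in auto)
    then show "norm q \<le> 1 / r^k" unfolding q_def by (simp add: norm_divide field_simps)
  qed
  define N where "N = hf - fps_const c"
  define D where "D = 1 - fps_const (cnj c) * hf"
  have D0: "D $ 0 \<noteq> 0"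
  proof -
    have "norm c * norm c \<le> norm c * 1" using nc t by (intro mult_left_mono) auto
    then have "norm (cnj c * c) < 1" unfolding norm_mult complex_mod_cnj using nc t by linarith
    then show ?thesis by (auto simp: D_def hf0)
  qed
  have Hexp: "H has_fps_expansion N / D"
    unfolding H_def[abs_def] N_def D_def
    by (intro has_fps_expansion_divide' has_fps_expansion_diff has_fps_expansion_cmult_left
          hexp has_fps_expansion_const has_fps_expansion_1) (use D0 in \<open>simp add: D_def\<close>)
  define Q where "Q = N / D"
  have qQ: "q = Q $ k" unfolding q_def Q_def by (rule fps_nth_fps_expansion[OF Hexp, symmetric])
  have QD: "Q * D = N" unfolding Q_def by (rule fps_div_mult_cancel[OF D0])
  have Q0: "Q $ 0 = 0"
  proof -
    have "Q $ 0 * D $ 0 = N $ 0" using arg_cong[OF QD, of "\<lambda>F. fps_nth F 0"] by simp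
    moreover have "N $ 0 = 0" by (simp add: N_def hf0)
    ultimately show ?thesis using D0 by simp
  qed
  have Dnth: "D $ (k - i) = 0" if "0 < i" "i < k" for i
  proof -
    have "\<not> k dvd (k - i)" using that by (auto dest: dvd_imp_le)
    then show ?thesis using that by (simp add: D_def hnth)
  qed
  have "N $ k = (\<Sum>i=0..k. Q $ i * D $ (k - i))" using QD by (metis fps_mult_nth)
  also have "\<dots> = Q $ k * D $ 0 + (\<Sum>i\<in>{0..k} - {k}. Q $ i * D $ (k - i))"
    by (subst sum.remove[of _ k]) auto
  also have "(\<Sum>i\<in>{0..k} - {k}. Q $ i * D $ (k - i)) = 0"
  proof (rule sum.neutral, rule ballI)
    fix i assume "i \<in> {0..k} - {k}"
    then have "i < k" by auto
    show "Q $ i * D $ (k - i) = 0"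
      by (cases "i = 0") (use Q0 Dnth \<open>i < k\<close> in auto)
  qed
  finally have "N $ k = Q $ k * D $ 0" by simp
  moreover have "N $ k = b k" using k by (simp add: N_def hnth)
  moreover have "D $ 0 = complex_of_real (1 - (norm c)^2)"
    by (simp add: D_def hf0 complex_norm_square[symmetric] mult.commute del: of_real_power)
  ultimately have "b k = q * complex_of_real (1 - (norm c)^2)" using qQ by simp
  moreover have "1 - (norm c)^2 \<ge> 0"
  proof -
    have "norm c * norm c \<le> norm c * 1" using nc t by (intro mult_left_mono) auto
    then show ?thesis using nc t by (simp add: power2_eq_square)
  qed
  ultimately have "norm (b k) = norm q * (1 - (norm c)^2)" by (simp only: norm_mult norm_of_real)
  also have "\<dots> \<le> 1 * (1 - (norm c)^2)" using q1 \<open>1 - (norm c)^2 \<ge> 0\<close> by (intro mult_right_mono) auto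
  finally show ?thesis by (simp add: b_def c_def)
qed



lemma sq_less_iff: "(0::real) \<le> a \<Longrightarrow> 0 \<le> b \<Longrightarrow> a < b \<longleftrightarrow> a^2 < b^2"
  using power_strict_mono[of a b 2] power_less_imp_less_base[of a 2 b] by auto

lemma om_iff:
  assumes g: "0 \<le> \<gamma>" "\<gamma> < 1"
  shows "z \<in> Omega \<gamma> \<longleftrightarrow> norm z < norm (complex_of_real (1+\<gamma>) - complex_of_real \<gamma> * z)"
proof -
  define x where "x = Re z"
  define y where "y = Im z"
  have g1: "1 - \<gamma> > 0" using g by simp
  have "z \<in> Omega \<gamma> \<longleftrightarrow> norm (z + complex_of_real (\<gamma>/(1-\<gamma>))) < 1/(1-\<gamma>)"
    by (simp add: Omega_def dist_norm norm_minus_commute)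
  also have "\<dots> \<longleftrightarrow> (norm (z + complex_of_real (\<gamma>/(1-\<gamma>))))^2 < (1/(1-\<gamma>))^2"
    by (rule sq_less_iff) (use g1 in auto)
  also have "(norm (z + complex_of_real (\<gamma>/(1-\<gamma>))))^2 = (x + \<gamma>/(1-\<gamma>))^2 + y^2"
    by (simp add: cmod_power2 x_def y_def)
  also have "(x + \<gamma>/(1-\<gamma>))^2 + y^2 < (1/(1-\<gamma>))^2 \<longleftrightarrow>
      ((1-\<gamma>)*(x^2+y^2) + 2*\<gamma>*x - (1+\<gamma>))/(1-\<gamma>) < 0"
  proof -
    have "(x + \<gamma>/(1-\<gamma>))^2 + y^2 - (1/(1-\<gamma>))^2 = ((1-\<gamma>)*(x^2+y^2) + 2*\<gamma>*x - (1+\<gamma>))/(1-\<gamma>)"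
    proof -
      define u where "u = 1/(1-\<gamma>)"
      have u1: "u*(1-\<gamma>) = 1" using g1 by (simp add: u_def)
      have a: "\<gamma>/(1-\<gamma>) = \<gamma>*u" by (simp add: u_def)
      have "(\<gamma>^2-1)*u^2 = -(1+\<gamma>)*(u*(1-\<gamma>))*u" by (simp add: algebra_simps power2_eq_square)
      then have b: "(\<gamma>^2-1)*u^2 = -(1+\<gamma>)*u" using u1 by simp
      have "(x + \<gamma>*u)^2 + y^2 - u^2 = x^2 + y^2 + 2*\<gamma>*x*u + (\<gamma>^2-1)*u^2"
        by (simp add: algebra_simps power2_eq_square)
      also have "\<dots> = x^2 + y^2 + 2*\<gamma>*x*u - (1+\<gamma>)*u" unfolding b by (simp add: algebra_simps)
      also have "\<dots> = u*(1-\<gamma>)*(x^2+y^2) + 2*\<gamma>*x*u - (1+\<gamma>)*u" using u1 by simp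
      also have "\<dots> = ((1-\<gamma>)*(x^2+y^2) + 2*\<gamma>*x - (1+\<gamma>)) * u" by (simp add: algebra_simps)
      finally show ?thesis unfolding a by (simp add: u_def)
    qed
    then show ?thesis by linarith
  qed
  also have "\<dots> \<longleftrightarrow> (1-\<gamma>)*(x^2+y^2) + 2*\<gamma>*x - (1+\<gamma>) < 0"
    using g1 by (simp add: divide_less_0_iff)
  also have "\<dots> \<longleftrightarrow> (1+\<gamma>) * ((1-\<gamma>)*(x^2+y^2) + 2*\<gamma>*x - (1+\<gamma>)) < 0"
    using g by (simp add: mult_less_0_iff)
  also have "\<dots> \<longleftrightarrow> x^2 + y^2 < (1+\<gamma>-\<gamma>*x)^2 + (\<gamma>*y)^2"
    by (simp add: algebra_simps power2_eq_square)
  also have "\<dots> \<longleftrightarrow> (norm z)^2 < (norm (complex_of_real (1+\<gamma>) - complex_of_real \<gamma> * z))^2"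
    by (simp add: cmod_power2 x_def y_def)
  also have "\<dots> \<longleftrightarrow> norm z < norm (complex_of_real (1+\<gamma>) - complex_of_real \<gamma> * z)"
    by (rule sq_less_iff[symmetric]) auto
  finally show ?thesis .
qed

lemma wiener:
  fixes G :: "complex \<Rightarrow> complex"
  assumes holo: "G holomorphic_on ball 0 1"
      and bd: "\<And>w. w \<in> ball 0 1 \<Longrightarrow> norm (G w) \<le> 1" and k: "k \<ge> 1"
  shows "norm ((deriv^^k) G 0 / fact k) \<le> 1 - (norm (G 0))^2"
proof -
  define X where "X = norm ((deriv^^k) G 0 / fact k)"
  define Y where "Y = (norm (G 0))^2"
  have ev: "eventually (\<lambda>s. s * X \<le> 1 - s^2 * Y) (at_left (1::real))"
  proof -
    have "eventually (\<lambda>s. 0 < s \<and> s < (1::real)) (at_left 1)"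
      using eventually_at_left_real[of 0 "1::real"] by (auto elim: eventually_mono)
    then show ?thesis
    proof eventually_elim
      case (elim s)
      have h1: "(\<lambda>w. complex_of_real s * G w) holomorphic_on ball 0 1" by (intro holomorphic_intros holo)
      have "norm ((deriv^^k) (\<lambda>w. complex_of_real s * G w) 0 / fact k) \<le> 1 - (norm (complex_of_real s * G 0))^2"
      proof (rule wiener_strict[OF h1 _ _ k])
        show "norm (complex_of_real s * G w) \<le> s" if "w \<in> ball 0 1" for w
          using bd[OF that] elim by (simp add: norm_mult mult_left_le)
      qed (use elim in auto)
      moreover have "(deriv^^k) (\<lambda>w. complex_of_real s * G w) 0 = complex_of_real s * (deriv^^k) G 0"
        by (rule higher_deriv_cmult[OF holo]) auto
      ultimately show ?case using elim
        by (simp add: X_def Y_def norm_mult norm_divide power_mult_distrib)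
    qed
  qed
  have l1: "((\<lambda>s. s * X) \<longlongrightarrow> 1 * X) (at_left (1::real))" by (intro tendsto_intros)
  have l2: "((\<lambda>s. 1 - s^2 * Y) \<longlongrightarrow> 1 - 1^2 * Y) (at_left (1::real))" by (intro tendsto_intros)
  have "1 * X \<le> 1 - 1^2 * Y" by (rule tendsto_le[OF _ l2 l1 ev]) simp
  then show ?thesis by (simp add: X_def Y_def)
qed



lemma taylor0: "taylor_coeff f 0 = f 0" by (simp add: taylor_coeff_def)

lemma coeff_bound:
  assumes g: "0 \<le> \<gamma>" "\<gamma> < 1" and f: "f \<in> bclass (Omega \<gamma>)" and n: "n \<ge> 1"
  shows "norm (taylor_coeff f n) \<le> (1 - (norm (taylor_coeff f 0))^2) / (1+\<gamma>)"
proof -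
  define \<Omega> where "\<Omega> = Omega \<gamma>"
  have opn: "open \<Omega>" by (simp add: \<Omega>_def Omega_def)
  have fana: "f analytic_on \<Omega>" and fbd: "\<And>z. z \<in> \<Omega> \<Longrightarrow> norm (f z) \<le> 1"
    using f by (auto simp: bclass_def \<Omega>_def)
  have fholo: "f holomorphic_on \<Omega>" using fana by (rule analytic_imp_holomorphic)
  define Dn where "Dn z = complex_of_real (1+\<gamma>) - complex_of_real \<gamma> * z" for z
  have om: "z \<in> \<Omega> \<longleftrightarrow> norm z < norm (Dn z)" for z
    unfolding \<Omega>_def Dn_def by (rule om_iff[OF g])
  define \<psi> where "\<psi> w = complex_of_real (1+\<gamma>) * w / (1 + complex_of_real \<gamma> * w)" for w
  have dnz: "1 + complex_of_real \<gamma> * w \<noteq> 0" if "w \<in> ball 0 1" for w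
  proof
    assume "1 + complex_of_real \<gamma> * w = 0"
    then have "norm (complex_of_real \<gamma> * w) = 1" by (metis add.inverse_unique norm_minus_cancel norm_one)
    moreover have "norm (complex_of_real \<gamma> * w) < 1"
    proof -
      have "norm (complex_of_real \<gamma> * w) = \<gamma> * norm w" using g by (simp add: norm_mult)
      also have "\<dots> \<le> 1 * norm w" using g by (intro mult_right_mono) auto
      finally show ?thesis using that by simp
    qed
    ultimately show False by simp
  qed
  have psi_in: "\<psi> w \<in> \<Omega>" if w: "w \<in> ball 0 1" for w
  proof -
    have e: "Dn (\<psi> w) = complex_of_real (1+\<gamma>) / (1 + complex_of_real \<gamma> * w)"
      using dnz[OF w] by (simp add: Dn_def \<psi>_def field_simps)
    have "\<psi> w = w * Dn (\<psi> w)" by (subst e) (simp add: \<psi>_def)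
    then have "norm (\<psi> w) = norm w * norm (Dn (\<psi> w))" by (metis norm_mult)
    moreover have "norm (Dn (\<psi> w)) > 0" using dnz[OF w] g unfolding e
      by (simp add: cg)
    ultimately have "norm (\<psi> w) < norm (Dn (\<psi> w))" using w by simp
    then show ?thesis using om by simp
  qed
  define G where "G w = f (\<psi> w)" for w
  have Gholo: "G holomorphic_on ball 0 1"
  proof -
    have "(f \<circ> \<psi>) holomorphic_on ball 0 1"
    proof (rule holomorphic_on_compose_gen[OF _ fholo])
      show "\<psi> holomorphic_on ball 0 1" unfolding \<psi>_def[abs_def] by (intro holomorphic_intros dnz)
      show "\<psi> ` ball 0 1 \<subseteq> \<Omega>" using psi_in by blast
    qed
    then show ?thesis by (simp add: G_def[abs_def] o_def)
  qed
  have Gbd: "norm (G w) \<le> 1" if "w \<in> ball 0 1" for w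
    unfolding G_def by (rule fbd[OF psi_in[OF that]])
  have G0: "G 0 = f 0" by (simp add: G_def \<psi>_def)
  define GF where "GF = fps_expansion G 0"
  have Gexp: "G has_fps_expansion GF"
    unfolding GF_def by (rule has_fps_expansion_fps_expansion[OF open_ball _ Gholo]) simp
  have GFnth: "GF $ i = (deriv^^i) G 0 / fact i" for i by (rule fps_nth_fps_expansion[OF Gexp])
  define p where "p z = z / Dn z" for z
  have pexp: "p has_fps_expansion Pf \<gamma>"
  proof -
    have "(\<lambda>z. z / Dn z) has_fps_expansion fps_X / Den \<gamma>"
      unfolding Dn_def Den_def
      by (intro has_fps_expansion_divide' has_fps_expansion_fps_X has_fps_expansion_diff
           has_fps_expansion_const has_fps_expansion_cmult_left) (use Den0[OF g(1)] in \<open>simp add: Den_def\<close>)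
    then show ?thesis unfolding Pf_eq[OF g(1)] p_def[abs_def] .
  qed
  have P0: "Pf \<gamma> $ 0 = 0" by (simp add: Pf_def)
  have cexp: "(G \<circ> p) has_fps_expansion fps_compose GF (Pf \<gamma>)"
    by (rule has_fps_expansion_compose[OF Gexp pexp P0])
  have "eventually (\<lambda>z. z \<in> \<Omega>) (nhds 0)"
    using opn by (intro eventually_nhds_in_open) (auto simp: om Dn_def cg g)
  then have "eventually (\<lambda>z. (G \<circ> p) z = f z) (nhds 0)"
  proof eventually_elim
    case (elim z)
    have dz: "Dn z \<noteq> 0" using elim om by fastforce
    have "\<psi> (p z) = z"
    proof -
      have "1 + complex_of_real \<gamma> * (z / Dn z) = complex_of_real (1+\<gamma>) / Dn z"
        using dz by (simp add: Dn_def field_simps)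
      then show ?thesis using dz g unfolding \<psi>_def p_def by (simp add: cg)
    qed
    then show ?case by (simp add: G_def)
  qed
  then have fexp: "f has_fps_expansion fps_compose GF (Pf \<gamma>)"
    using cexp has_fps_expansion_cong by blast
  have tc: "taylor_coeff f n = (\<Sum>i=0..n. GF $ i * ((Pf \<gamma>)^i $ n))"
    unfolding taylor_coeff_def fps_nth_fps_expansion[OF fexp, symmetric] by (rule fps_compose_nth)
  define W where "W = 1 - (norm (f 0))^2"
  have nnP: "(Pf \<gamma>)^i $ n = complex_of_real (norm ((Pf \<gamma>)^i $ n))" for i
    using nn_power[OF nn_Pf[OF g(1)]] unfolding nn_def by blast
  have trm: "norm (GF $ i) * norm ((Pf \<gamma>)^i $ n) \<le> W * norm ((Pf \<gamma>)^i $ n)" if "i \<in> {0..n}" for i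
  proof (cases "i = 0")
    case True then show ?thesis using n by simp
  next
    case False
    have "norm (GF $ i) \<le> W" unfolding GFnth W_def G0[symmetric]
      by (rule wiener[OF Gholo Gbd]) (use False in auto)
    then show ?thesis by (intro mult_right_mono) auto
  qed
  have "norm (taylor_coeff f n) \<le> (\<Sum>i=0..n. norm (GF $ i) * norm ((Pf \<gamma>)^i $ n))"
    unfolding tc by (rule order_trans[OF norm_sum]) (simp add: norm_mult)
  also have "\<dots> \<le> (\<Sum>i=0..n. W * norm ((Pf \<gamma>)^i $ n))" by (rule sum_mono[OF trm])
  also have "\<dots> = W * (\<Sum>i=0..n. norm ((Pf \<gamma>)^i $ n))" by (simp add: sum_distrib_left)
  also have "(\<Sum>i=0..n. norm ((Pf \<gamma>)^i $ n)) = 1/(1+\<gamma>)"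
  proof -
    have "complex_of_real (\<Sum>i=0..n. norm ((Pf \<gamma>)^i $ n)) = (\<Sum>i=0..n. (Pf \<gamma>)^i $ n)"
      using nnP by simp
    also have "\<dots> = complex_of_real (1/(1+\<gamma>))" by (rule T_nth[OF g(1) n])
    finally show ?thesis using of_real_eq_iff by blast
  qed
  finally show ?thesis by (simp add: W_def taylor0)
qed



lemma aux1: "(y::real) > 0 \<Longrightarrow> a/(2*y) * (c*y^2/(4*d)) = a*c*y/(8*d)"
  by (simp add: power2_eq_square field_simps)

lemma final_ineq:
  fixes \<gamma> x r :: real
  assumes g: "0 \<le> \<gamma>" "\<gamma> < 1" and x: "0 \<le> x" "x \<le> 1" and r: "0 \<le> r" "r \<le> (1+\<gamma>)/(3+\<gamma>)"
  defines "B \<equiv> (1 - x^2)/(1+\<gamma>)"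
  shows "x + B * (r/(1-r)) + (1/(1+x) + r/(1-r)) * (B^2 * (r^2/(1-r^2))) \<le> 1"
proof -
  have r3: "r * (3+\<gamma>) \<le> 1+\<gamma>" using r g by (simp add: field_simps)
  have "(1+\<gamma>)/(3+\<gamma>) < 1" using g by simp
  then have r1: "r < 1" using r by linarith
  have B0: "B \<ge> 0" unfolding B_def using x g by (simp add: power_le_one)
  have R: "r/(1-r) \<le> (1+\<gamma>)/2" using r1 r3 by (simp add: field_simps)
  have R0: "r/(1-r) \<ge> 0" using r r1 by simp
  have sq: "(r*(3+\<gamma>))^2 \<le> (1+\<gamma>)^2" using r3 r g by (intro power_mono) auto
  have r21: "r^2 < 1"
  proof -
    have "r * r \<le> 1 * r" using r r1 by (intro mult_right_mono) auto
    then show ?thesis using r1 by (simp add: power2_eq_square)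
  qed
  have S: "r^2/(1-r^2) \<le> (1+\<gamma>)^2/(4*(2+\<gamma>))"
  proof -
    have "r^2 * (4*(2+\<gamma>)) \<le> (1+\<gamma>)^2 * (1 - r^2)"
      using sq by (simp add: power2_eq_square algebra_simps)
    then show ?thesis using r21 g by (simp add: field_simps)
  qed
  have S0: "r^2/(1-r^2) \<ge> 0" using r21 by simp
  have "x + B * (r/(1-r)) + (1/(1+x) + r/(1-r)) * (B^2 * (r^2/(1-r^2)))
        \<le> x + B * ((1+\<gamma>)/2) + (1/(1+x) + (1+\<gamma>)/2) * (B^2 * ((1+\<gamma>)^2/(4*(2+\<gamma>))))"
  proof -
    have "B * (r/(1-r)) \<le> B * ((1+\<gamma>)/2)" using B0 R by (intro mult_left_mono)
    moreover have "(1/(1+x) + r/(1-r)) * (B^2 * (r^2/(1-r^2))) \<le> (1/(1+x) + (1+\<gamma>)/2) * (B^2 * ((1+\<gamma>)^2/(4*(2+\<gamma>))))"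
    proof (rule mult_mono)
      show "1/(1+x) + r/(1-r) \<le> 1/(1+x) + (1+\<gamma>)/2" using R by simp
      show "B^2 * (r^2/(1-r^2)) \<le> B^2 * ((1+\<gamma>)^2/(4*(2+\<gamma>)))" using S by (intro mult_left_mono) auto
      show "0 \<le> 1/(1+x) + (1+\<gamma>)/2" using x g by simp
      show "0 \<le> B^2 * (r^2/(1-r^2))" using S0 by (intro mult_nonneg_nonneg) auto
    qed
    ultimately show ?thesis by linarith
  qed
  also have "\<dots> = x + (1-x^2)/2 + (2 + (1+\<gamma>)*(1+x)) * (1-x)^2 * (1+x) / (8*(2+\<gamma>))"
  proof -
    have "B * ((1+\<gamma>)/2) = (1-x^2)/2" using g by (simp add: B_def)
    moreover have "(1/(1+x) + (1+\<gamma>)/2) * (B^2 * ((1+\<gamma>)^2/(4*(2+\<gamma>)))) =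
          (2 + (1+\<gamma>)*(1+x)) * (1-x)^2 * (1+x) / (8*(2+\<gamma>))"
    proof -
      have e1: "B^2 * (1+\<gamma>)^2 = (1-x^2)^2" using g by (simp add: B_def power_divide)
      have e2: "(1-x^2)^2 = (1-x)^2*(1+x)^2" by (simp add: power2_eq_square algebra_simps)
      have a1: "1/(1+x) + (1+\<gamma>)/2 = (2 + (1+\<gamma>)*(1+x)) / (2*(1+x))"
        using x by (simp add: field_simps)
      have a2: "B^2 * ((1+\<gamma>)^2/(4*(2+\<gamma>))) = (1-x)^2*(1+x)^2 / (4*(2+\<gamma>))"
        using e1 e2 by (simp add: mult.assoc[symmetric])
      have "(1/(1+x) + (1+\<gamma>)/2) * (B^2 * ((1+\<gamma>)^2/(4*(2+\<gamma>)))) =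
            (2 + (1+\<gamma>)*(1+x)) / (2*(1+x)) * ((1-x)^2*(1+x)^2 / (4*(2+\<gamma>)))"
        unfolding a1 a2 ..
      also have "\<dots> = (2 + (1+\<gamma>)*(1+x)) * (1-x)^2 * (1+x) / (8*(2+\<gamma>))"
        using x by (intro aux1) auto
      finally show ?thesis .
    qed
    ultimately show ?thesis by simp
  qed
  also have "\<dots> \<le> 1"
  proof -
    have k: "(2 + (1+\<gamma>)*(1+x)) * (1+x) \<le> 4*(2+\<gamma>)"
    proof -
      have "(2 + (1+\<gamma>)*(1+x)) * (1+x) \<le> (2 + (1+\<gamma>)*2) * 2"
        using x g by (intro mult_mono add_left_mono mult_left_mono) auto
      then show ?thesis by simp
    qed
    have "(2 + (1+\<gamma>)*(1+x)) * (1-x)^2 * (1+x) / (8*(2+\<gamma>)) \<le> (4*(2+\<gamma>)) * (1-x)^2 / (8*(2+\<gamma>))"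
    proof (rule divide_right_mono)
      show "(2 + (1+\<gamma>)*(1+x)) * (1-x)^2 * (1+x) \<le> (4*(2+\<gamma>)) * (1-x)^2"
        using mult_right_mono[OF k, of "(1-x)^2"] by (simp add: algebra_simps)
    qed (use g in auto)
    also have "\<dots> = (1-x)^2/2" using g by (simp add: field_simps)
    finally have "(2 + (1+\<gamma>)*(1+x)) * (1-x)^2 * (1+x) / (8*(2+\<gamma>)) \<le> (1-x)^2/2" .
    moreover have "x + (1-x^2)/2 + (1-x)^2/2 = 1" by (simp add: power2_eq_square field_simps)
    ultimately show ?thesis by linarith
  qed
  finally show ?thesis .
qed



lemma part1:
  assumes g: "0 \<le> \<gamma>" "\<gamma> < 1" and f: "f \<in> bclass (Omega \<gamma>)"
      and r: "0 \<le> r" "r \<le> (1+\<gamma>)/(3+\<gamma>)"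
  shows "bohr_lhs f r \<le> 1"
proof -
  define a where "a = taylor_coeff f"
  define x where "x = norm (a 0)"
  define B where "B = (1 - x^2)/(1+\<gamma>)"
  have "(1+\<gamma>)/(3+\<gamma>) < 1" using g by simp
  then have r1: "r < 1" using r by linarith
  have "0 \<in> Omega \<gamma>" using g by (simp add: om_iff cg)
  then have "norm (f 0) \<le> 1" using f by (auto simp: bclass_def)
  then have x1: "x \<le> 1" and x0: "0 \<le> x" by (auto simp: x_def a_def taylor0)
  have B0: "B \<ge> 0" unfolding B_def using x0 x1 g by (simp add: power_le_one)
  have B1: "B \<le> 1" unfolding B_def using g by (simp add: field_simps)
  have aS: "norm (a (Suc n)) \<le> B" for n
    unfolding a_def B_def x_def by (rule coeff_bound[OF g f]) simp
  have a1: "norm (a n) \<le> 1" for n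
    by (cases n) (use x1 aS B1 in \<open>auto simp: x_def intro: order_trans\<close>)
  have sg: "(\<lambda>n. r^n) sums (1/(1-r))" using r r1 by (intro geometric_sums) simp
  have sum1: "summable (\<lambda>n. norm (a n) * r^n)"
  proof (rule summable_comparison_test[OF _ sums_summable[OF sg]])
    show "\<exists>N. \<forall>n\<ge>N. norm (norm (a n) * r^n) \<le> r^n"
      using a1 r by (intro exI[of _ 0]) (auto intro: mult_left_le_one_le simp: abs_mult)
  qed
  have sB: "(\<lambda>n. B * r * r^n) sums (B * r * (1/(1-r)))" by (rule sums_mult[OF sg])
  have s1s: "summable (\<lambda>n. norm (a (Suc n)) * r^(Suc n))"
    using sum1 by (subst summable_Suc_iff)
  have le1: "(\<Sum>n. norm (a (Suc n)) * r^(Suc n)) \<le> B * r * (1/(1-r))"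
  proof (rule sums_le[OF _ summable_sums[OF s1s] sB])
    fix n show "norm (a (Suc n)) * r^(Suc n) \<le> B * r * r^n"
    proof -
      have "norm (a (Suc n)) * (r * r^n) \<le> B * (r * r^n)" using aS[of n] r by (intro mult_right_mono) auto
      then show ?thesis by (simp add: mult_ac)
    qed
  qed
  have L1: "(\<Sum>n. norm (a n) * r^n) \<le> x + B * (r/(1-r))"
  proof -
    have "(\<Sum>n. norm (a n) * r^n) = norm (a 0) * r^0 + (\<Sum>n. norm (a (Suc n)) * r^(Suc n))"
      using suminf_split_head[OF sum1] by simp
    then show ?thesis using le1 by (simp add: x_def)
  qed
  have r21: "r^2 < 1"
  proof -
    have "r * r \<le> 1 * r" using r r1 by (intro mult_right_mono) auto
    then show ?thesis using r1 by (simp add: power2_eq_square)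
  qed
  have sg2: "(\<lambda>n. (r^2)^n) sums (1/(1-r^2))" using r r21 by (intro geometric_sums) simp
  have sB2: "(\<lambda>n. B^2 * r^2 * (r^2)^n) sums (B^2 * r^2 * (1/(1-r^2)))" by (rule sums_mult[OF sg2])
  have t2: "norm (a (Suc n))^2 * r^(2 * Suc n) \<le> B^2 * r^2 * (r^2)^n" for n
  proof -
    have "norm (a (Suc n))^2 \<le> B^2" using aS[of n] by (intro power_mono) auto
    moreover have "r^(2 * Suc n) = r^2 * (r^2)^n" by (simp add: power_mult[symmetric] power_add[symmetric])
    moreover have "norm (a (Suc n))^2 * (r^2 * (r^2)^n) \<le> B^2 * (r^2 * (r^2)^n)"
      using calculation(1) r by (intro mult_right_mono) auto
    ultimately show ?thesis by (simp add: mult_ac)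
  qed
  have sum2: "summable (\<lambda>n. norm (a (Suc n))^2 * r^(2 * Suc n))"
  proof (rule summable_comparison_test[OF _ sums_summable[OF sB2]])
    have "norm (norm (a (Suc n))^2 * r^(2 * Suc n)) = norm (a (Suc n))^2 * r^(2 * Suc n)" for n
      using r by simp
    then show "\<exists>N. \<forall>n\<ge>N. norm (norm (a (Suc n))^2 * r^(2 * Suc n)) \<le> B^2 * r^2 * (r^2)^n"
      using t2 by (intro exI[of _ 0]) presburger
  qed
  have L2: "(\<Sum>n. norm (a (Suc n))^2 * r^(2 * Suc n)) \<le> B^2 * (r^2/(1-r^2))"
    using sums_le[OF t2 summable_sums[OF sum2] sB2] by simp
  have L20: "(\<Sum>n. norm (a (Suc n))^2 * r^(2 * Suc n)) \<ge> 0"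
    by (rule suminf_nonneg[OF sum2]) (use r in simp)
  have cf: "1/(1+x) + r/(1-r) \<ge> 0" using x0 r r1 by simp
  have "bohr_lhs f r = (\<Sum>n. norm (a n) * r^n) + (1/(1+x) + r/(1-r)) * (\<Sum>n. norm (a (Suc n))^2 * r^(2 * Suc n))"
    by (simp add: bohr_lhs_def a_def x_def Let_def)
  also have "\<dots> \<le> x + B * (r/(1-r)) + (1/(1+x) + r/(1-r)) * (B^2 * (r^2/(1-r^2)))"
    using L1 mult_left_mono[OF L2 cf] by linarith
  also have "\<dots> \<le> 1" unfolding B_def by (rule final_ineq[OF g x0 x1 r])
  finally show ?thesis .
qed



lemma ex_norm_identity:
  fixes z :: complex and a \<gamma> :: real
  shows "(norm (complex_of_real (1+\<gamma>) - complex_of_real (\<gamma>+a) * z))^2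
         - (norm (complex_of_real (a*(1+\<gamma>)) - complex_of_real (1+a*\<gamma>) * z))^2
       = (1 - a^2) * ((norm (complex_of_real (1+\<gamma>) - complex_of_real \<gamma> * z))^2 - (norm z)^2)"
proof -
  define x where "x = Re z"
  define y where "y = Im z"
  have e1: "(norm (complex_of_real (1+\<gamma>) - complex_of_real (\<gamma>+a) * z))^2 = (1+\<gamma> - (\<gamma>+a)*x)^2 + ((\<gamma>+a)*y)^2"
    by (simp add: cmod_power2 x_def y_def)
  have e2: "(norm (complex_of_real (a*(1+\<gamma>)) - complex_of_real (1+a*\<gamma>) * z))^2 = (a*(1+\<gamma>) - (1+a*\<gamma>)*x)^2 + ((1+a*\<gamma>)*y)^2"
    by (simp add: cmod_power2 x_def y_def)
  have e3: "(norm (complex_of_real (1+\<gamma>) - complex_of_real \<gamma> * z))^2 = (1+\<gamma> - \<gamma>*x)^2 + (\<gamma>*y)^2"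
    by (simp add: cmod_power2 x_def y_def)
  have e4: "(norm z)^2 = x^2 + y^2" by (simp add: cmod_power2 x_def y_def)
  show ?thesis unfolding e1 e2 e3 e4 by (simp add: power2_eq_square algebra_simps)
qed



lemma part2:
  assumes g: "0 \<le> \<gamma>" "\<gamma> < 1" and r: "(1+\<gamma>)/(3+\<gamma>) < r" "r < 1"
  shows "\<exists>f \<in> bclass (Omega \<gamma>). bohr_lhs f r > 1"
proof -
  have "(1+\<gamma>)/(3+\<gamma>) > 0" using g by simp
  then have r0: "r > 0" using r by linarith
  have rr: "1+\<gamma> < r*(3+\<gamma>)" using r(1) g by (simp add: pos_divide_less_eq mult.commute)
  define t where "t = (1+\<gamma>)*(1-r)/(2*r)"
  have t0: "t > 0" using r r0 g by (simp add: t_def)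
  have "(1+\<gamma>)*(1-r) < 2*r" using rr by (simp add: algebra_simps)
  then have t1: "t < 1" using r0 by (simp add: t_def pos_divide_less_eq)
  define a where "a = (1+t)/2"
  have a0: "0 < a" and a1: "a < 1" and at: "t < a" using t0 t1 by (auto simp: a_def)
  define q where "q = (\<gamma>+a)/(1+\<gamma>)"
  have q0: "0 < q" and q1: "q < 1" using a0 a1 g by (auto simp: q_def)
  have qg: "\<gamma> + a = q * (1+\<gamma>)" using g by (simp add: q_def)
  define e where "e n = (if n = 0 then a else -((1-a^2)*q^(n-1)/(1+\<gamma>)))" for n
  define E where "E = Abs_fps (\<lambda>n. complex_of_real (e n))"
  define Num where "Num z = complex_of_real (a*(1+\<gamma>)) - complex_of_real (1+a*\<gamma>) * z" for z
  define Den where "Den z = complex_of_real (1+\<gamma>) - complex_of_real (\<gamma>+a) * z" for z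
  define f where "f z = Num z / Den z" for z
  have a2: "1 - a^2 > 0"
  proof -
    have "a * a \<le> a * 1" using a0 a1 by (intro mult_left_mono) auto
    then show ?thesis using a1 by (simp add: power2_eq_square)
  qed
  have key: "norm (Num z) < norm (Den z)" if z: "z \<in> Omega \<gamma>" for z
  proof -
    have "norm z < norm (complex_of_real (1+\<gamma>) - complex_of_real \<gamma> * z)" using z om_iff[OF g] by blast
    then have lt: "(norm z)^2 < (norm (complex_of_real (1+\<gamma>) - complex_of_real \<gamma> * z))^2"
      using sq_less_iff[of "norm z" "norm (complex_of_real (1+\<gamma>) - complex_of_real \<gamma> * z)"] by simp
    have eq: "(norm (Den z))^2 - (norm (Num z))^2 = (1 - a^2) * ((norm (complex_of_real (1+\<gamma>) - complex_of_real \<gamma> * z))^2 - (norm z)^2)"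
      unfolding Den_def Num_def by (rule ex_norm_identity)
    have "(1 - a^2) * ((norm (complex_of_real (1+\<gamma>) - complex_of_real \<gamma> * z))^2 - (norm z)^2) > 0"
      using a2 lt by (intro mult_pos_pos) auto
    then have "(norm (Num z))^2 < (norm (Den z))^2" using eq by linarith
    then show ?thesis using sq_less_iff[of "norm (Num z)" "norm (Den z)"] by (simp only: norm_ge_zero simp_thms)
  qed
  have dnz: "Den z \<noteq> 0" if "z \<in> Omega \<gamma>" for z
    using key[OF that] by auto
  have fB: "f \<in> bclass (Omega \<gamma>)"
  proof -
    have opn: "open (Omega \<gamma>)" by (simp add: Omega_def)
    have "f holomorphic_on Omega \<gamma>" unfolding f_def[abs_def] Num_def Den_def
      by (intro holomorphic_intros) (use dnz in \<open>simp add: Den_def\<close>)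
    then have "f analytic_on Omega \<gamma>" using opn by (simp add: analytic_on_open)
    moreover have "f z \<in> cball 0 1" if "z \<in> Omega \<gamma>" for z
      using key[OF that] dnz[OF that] by (simp add: f_def norm_divide)
    ultimately show ?thesis by (auto simp: bclass_def)
  qed
  define Nf where "Nf = fps_const (complex_of_real (a*(1+\<gamma>))) - fps_const (complex_of_real (1+a*\<gamma>)) * fps_X"
  define Df where "Df = fps_const (complex_of_real (1+\<gamma>)) - fps_const (complex_of_real (\<gamma>+a)) * fps_X"
  have Df0: "Df $ 0 \<noteq> 0" using g by (simp add: Df_def cg)
  have fexp0: "f has_fps_expansion Nf / Df"
    unfolding f_def[abs_def] Num_def Den_def Nf_def Df_def
    by (intro has_fps_expansion_divide' has_fps_expansion_fps_X has_fps_expansion_diff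
        has_fps_expansion_const has_fps_expansion_cmult_left) (use Df0 in \<open>simp add: Df_def\<close>)
  have ED: "E * Df = Nf"
  proof (rule fps_ext)
    fix m
    have l: "(E * Df) $ m = complex_of_real ((1+\<gamma>) * e m - (if m = 0 then 0 else (\<gamma>+a) * e (m-1)))"
      unfolding Df_def lin_nth by (simp add: E_def)
    have rr: "Nf $ m = complex_of_real (if m = 0 then a*(1+\<gamma>) else if m = 1 then -(1+a*\<gamma>) else 0)"
      by (simp add: Nf_def fps_X_def)
    have "(1+\<gamma>) * e m - (if m = 0 then 0 else (\<gamma>+a) * e (m-1)) =
          (if m = 0 then a*(1+\<gamma>) else if m = 1 then -(1+a*\<gamma>) else 0)"
    proof (cases m)
      case 0 then show ?thesis by (simp add: e_def)
    next
      case (Suc k)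
      show ?thesis
      proof (cases k)
        case 0
        have "(1+\<gamma>)*((1-a^2)/(1+\<gamma>)) = 1-a^2" using g by simp
        then have "(1+\<gamma>)*(-((1-a^2)*q^0/(1+\<gamma>))) - (\<gamma>+a)*a = -(1+a*\<gamma>)"
          by (simp add: power2_eq_square algebra_simps)
        then show ?thesis using Suc 0 by (simp add: e_def)
      next
        case (Suc j)
        have "(1+\<gamma>) * (-((1-a^2)*q^(Suc j)/(1+\<gamma>))) - (\<gamma>+a) * (-((1-a^2)*q^j/(1+\<gamma>))) = 0"
        proof -
          have "(1+\<gamma>) * (-((1-a^2)*q^(Suc j)/(1+\<gamma>))) = -((1-a^2)*q^(Suc j))" using g by simp
          moreover have "(\<gamma>+a) * (-((1-a^2)*q^j/(1+\<gamma>))) = -((1-a^2)*q^(Suc j))"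
            unfolding qg using g by simp
          ultimately show ?thesis by simp
        qed
        then show ?thesis using Suc \<open>m = Suc k\<close> by (simp add: e_def)
      qed
    qed
    then show "(E * Df) $ m = Nf $ m" unfolding l rr by simp
  qed
  have fexp: "f has_fps_expansion E" using fexp0 div_eq[OF Df0 ED] by simp
  have tcf: "taylor_coeff f n = complex_of_real (e n)" for n
    unfolding taylor_coeff_def fps_nth_fps_expansion[OF fexp, symmetric] by (simp add: E_def)
  have eS: "\<bar>e (Suc n)\<bar> = (1-a^2)*q^n/(1+\<gamma>)" for n
    using a2 q0 g by (simp add: e_def)
  have e0: "e 0 = a" by (simp add: e_def)
  have "q * r < 1 * 1" using q0 q1 r0 r by (intro mult_strict_mono) auto
  then have qr: "q * r < 1" by simp
  have "(\<lambda>n. (q*r)^n) sums (1/(1-q*r))" using q0 r0 qr by (intro geometric_sums) simp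
  then have "(\<lambda>n. ((1-a^2)*r/(1+\<gamma>)) * (q*r)^n) sums (((1-a^2)*r/(1+\<gamma>)) * (1/(1-q*r)))"
    by (rule sums_mult)
  moreover have "(\<lambda>n. ((1-a^2)*r/(1+\<gamma>)) * (q*r)^n) = (\<lambda>n. \<bar>e (Suc n)\<bar> * r^(Suc n))"
    by (rule ext) (simp add: eS power_mult_distrib)
  ultimately have "(\<lambda>n. \<bar>e (Suc n)\<bar> * r^(Suc n)) sums (((1-a^2)*r/(1+\<gamma>)) * (1/(1-q*r)))" by simp
  then have "(\<lambda>n. \<bar>e n\<bar> * r^n) sums (((1-a^2)*r/(1+\<gamma>)) * (1/(1-q*r)) + \<bar>e 0\<bar> * r^0)"
    by (rule sums_Suc[where f="\<lambda>n. \<bar>e n\<bar> * r^n"])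
  then have s1: "(\<lambda>n. \<bar>e n\<bar> * r^n) sums (((1-a^2)*r/(1+\<gamma>)) * (1/(1-q*r)) + a)"
    using a0 by (simp add: e0)
  have big: "((1-a^2)*r/(1+\<gamma>)) * (1/(1-q*r)) + a > 1"
  proof -
    have h1: "r*(1+\<gamma>+2*a) > 1+\<gamma>"
    proof -
      have "2*a*r > 2*t*r" using at r0 by simp
      also have "2*t*r = (1+\<gamma>)*(1-r)" using r0 by (simp add: t_def)
      finally show ?thesis by (simp add: algebra_simps)
    qed
    have h2: "(1-a^2)*r - (1-a)*((1+\<gamma>)*(1-q*r)) = (1-a)*(r*(1+\<gamma>+2*a) - (1+\<gamma>))"
    proof -
      have e: "(1+\<gamma>)*(1-q*r) = (1+\<gamma>) - (\<gamma>+a)*r" unfolding qg by (simp add: algebra_simps)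
      show ?thesis unfolding e by (simp add: power2_eq_square algebra_simps)
    qed
    have "(1-a)*(r*(1+\<gamma>+2*a) - (1+\<gamma>)) > 0" using a1 h1 by simp
    then have h3: "(1-a)*((1+\<gamma>)*(1-q*r)) < (1-a^2)*r" using h2 by linarith
    have pos: "(1+\<gamma>)*(1-q*r) > 0" using g qr by simp
    have "((1-a^2)*r/(1+\<gamma>)) * (1/(1-q*r)) = (1-a^2)*r/((1+\<gamma>)*(1-q*r))" by simp
    also have "\<dots> > 1-a" using h3 pos by (simp add: pos_less_divide_eq)
    finally show ?thesis by simp
  qed
  have eS1: "\<bar>e (Suc n)\<bar> \<le> 1" for n
  proof -
    have "(1-a^2)*q^n \<le> 1*1" using a2 q0 q1 by (intro mult_mono power_le_one) auto
    then show ?thesis unfolding eS using g by (simp add: field_simps)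
  qed
  have r21: "r^2 < 1"
  proof -
    have "r * r \<le> 1 * r" using r0 r by (intro mult_right_mono) auto
    then show ?thesis using r by (simp add: power2_eq_square)
  qed
  have sg2: "(\<lambda>n. r^2 * (r^2)^n) sums (r^2 * (1/(1-r^2)))"
    using r21 by (intro sums_mult geometric_sums) simp
  have t2: "norm (\<bar>e (Suc n)\<bar>^2 * r^(2 * Suc n)) \<le> r^2 * (r^2)^n" for n
  proof -
    have "\<bar>e (Suc n)\<bar>^2 \<le> 1" using eS1[of n] by (simp add: power_le_one abs_square_le_1)
    moreover have "r^(2 * Suc n) = r^2 * (r^2)^n" by (simp add: power_mult[symmetric] power_add[symmetric])
    ultimately show ?thesis using r0 by (simp add: mult_left_le_one_le)
  qed
  have sum2: "summable (\<lambda>n. \<bar>e (Suc n)\<bar>^2 * r^(2 * Suc n))"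
    by (rule summable_comparison_test[OF _ sums_summable[OF sg2]]) (use t2 in blast)
  have L20: "(\<Sum>n. \<bar>e (Suc n)\<bar>^2 * r^(2 * Suc n)) \<ge> 0"
    by (rule suminf_nonneg[OF sum2]) (use r0 in simp)
  have cf: "1/(1+\<bar>e 0\<bar>) + r/(1-r) \<ge> 0" using r0 r by simp
  have "bohr_lhs f r = (\<Sum>n. \<bar>e n\<bar> * r^n) + (1/(1+\<bar>e 0\<bar>) + r/(1-r)) * (\<Sum>n. \<bar>e (Suc n)\<bar>^2 * r^(2 * Suc n))"
    by (simp add: bohr_lhs_def tcf Let_def)
  also have "(\<Sum>n. \<bar>e n\<bar> * r^n) = ((1-a^2)*r/(1+\<gamma>)) * (1/(1-q*r)) + a" using s1 by (rule sums_unique[symmetric])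
  finally have "bohr_lhs f r \<ge> ((1-a^2)*r/(1+\<gamma>)) * (1/(1-q*r)) + a"
    using mult_nonneg_nonneg[OF cf L20] by linarith
  then have "bohr_lhs f r > 1" using big by linarith
  then show ?thesis using fB by blast
qed


theorem theorem2:
  fixes \<gamma> :: real
  assumes "0 \<le> \<gamma>" and "\<gamma> < 1"
  shows "(\<forall>f \<in> bclass (Omega \<gamma>). \<forall>r. 0 \<le> r \<and> r \<le> (1 + \<gamma>) / (3 + \<gamma>) \<longrightarrow>
            bohr_lhs f r \<le> 1)
       \<and> (\<forall>r. (1 + \<gamma>) / (3 + \<gamma>) < r \<and> r < 1 \<longrightarrow>
            (\<exists>f \<in> bclass (Omega \<gamma>). bohr_lhs f r > 1))"
  using part1[OF assms] part2[OF assms] by blast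

end
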